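(* For every $n\ge2$, the first discriminant-resultant vanishes identically: $DR_{n,1}(f,g)=0$ as a polynomial in the coefficients of a binary form $f$ of degree $n$ and a binary form $g$ of degree $n-2$.
   Context: Let $k$ be a field of characteristic zero. For pairs $\sigma=(\sigma_0,\sigma_1)$, $\tau=(\tau_0,\tau_1)$, the bracket is $[\sigma,\tau]:=\sigma_0\tau_1-\tau_0\sigma_1$. Resultant convention: if $f=\prod_{i=1}^d(\gamma_{i,0}x-\gamma_{i,1}y)$ and $g=\prod_{j=1}^e(\delta_{j,0}x-\delta_{j,1}y)$, then $\mathrm{res}(f,g)=\prod_{i,j}[\gamma_i,\delta_j]$, a polynomial in the coefficients of $f,g$. Discriminant-resultants: for $n\ge2$, write $f(x,y)=\sum_{i=0}^n a_ix^iy^{n-i}$ of degree $n$ and let $g$ have degree $n-2$; the polynomials $DR_{n,r}(f,g)$, $0\le r\le n$, are defined by $$\sum_{r=0}^n DR_{n,r}(f,g)\,t^r=\mathrm{res}\big(f,\,x\partial_xf+t\,xy\,g\big)/(a_0a_n),$$ with $t$ an indeterminate and the division exact. *)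

theory Defs
  imports "Subresultants.Resultant_Prelim"
begin

text \<open>A binary form of degree d, sum over i of c i * x^i * y^(d-i), is encoded by its
  degree d and its coefficient function c (only c 0, ..., c d matter).
  Its dehomogenisation (y := 1) is the univariate polynomial below.\<close>

definition form_dehom :: "nat \<Rightarrow> (nat \<Rightarrow> 'a::comm_ring_1) \<Rightarrow> 'a poly" where
  "form_dehom d c = (\<Sum>i\<le>d. monom (c i) i)"

text \<open>Resultant of binary forms of (formal) degrees d and e with the paper's
  convention res(f,g) = prod_{i,j} [gamma_i, delta_j]; this equals
  (-1)^(d*e) times the Sylvester determinant taken with the formal degrees.\<close>

definition res_form :: "nat \<Rightarrow> (nat \<Rightarrow> 'a::comm_ring_1) \<Rightarrow> nat \<Rightarrow> (nat \<Rightarrow> 'a) \<Rightarrow> 'a" where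
  "res_form d c e c' =
     (-1)^(d*e) * det (sylvester_mat_sub d e (form_dehom d c) (form_dehom e c'))"

text \<open>For f = sum a_i x^i y^(n-i) (degree n) and g = sum b_j x^j y^(n-2-j) (degree n-2),
  the coefficient of x^i y^(n-i) in x*d_x f + t*x*y*g, as a polynomial in t.\<close>

definition DR_aux_coeff :: "nat \<Rightarrow> (nat \<Rightarrow> 'a::comm_ring_1) \<Rightarrow> (nat \<Rightarrow> 'a) \<Rightarrow> nat \<Rightarrow> 'a poly" where
  "DR_aux_coeff n a b i =
     [: of_nat i * a i, (if 1 \<le> i \<and> i - 1 \<le> n - 2 then b (i - 1) else 0) :]"

text \<open>res(f, x d_x f + t x y g) as a polynomial in t.\<close>

definition DR_numer :: "nat \<Rightarrow> (nat \<Rightarrow> 'a::comm_ring_1) \<Rightarrow> (nat \<Rightarrow> 'a) \<Rightarrow> 'a poly" where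
  "DR_numer n a b = res_form n (\<lambda>i. [: a i :]) n (DR_aux_coeff n a b)"

text \<open>Discriminant-resultant DR_{n,r}(f,g), evaluated at concrete coefficients
  (meaningful where a_0 a_n is nonzero).\<close>

definition DR :: "nat \<Rightarrow> nat \<Rightarrow> (nat \<Rightarrow> 'a::field) \<Rightarrow> (nat \<Rightarrow> 'a) \<Rightarrow> 'a" where
  "DR n r a b = coeff (DR_numer n a b) r / (a 0 * a n)"

end

theory Submission
  imports Defs "Subresultants.Subresultant" "HOL-Algebra.Algebraic_Closure_Type"
begin


hide_const (open) Polynomials.degree Polynomials.lead_coeff up_ring.coeff


lemma neg_prod_mset: "(-1::'k::comm_ring_1)^(size B) * (\<Prod>\<beta>\<in>#B. \<beta> - a) = (\<Prod>\<beta>\<in>#B. a - \<beta>)"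
  by (induction B) (auto simp: algebra_simps)

lemma swap_double_prod:
  "(-1::'k::comm_ring_1)^(size A * size B) * (\<Prod>\<beta>\<in>#B. \<Prod>\<alpha>\<in>#A. \<beta> - \<alpha>) = (\<Prod>\<alpha>\<in>#A. \<Prod>\<beta>\<in>#B. \<alpha> - \<beta>)"
proof (induction A)
  case empty then show ?case by simp
next
  case (add a A)
  have "(-1::'k)^(size (add_mset a A) * size B) * (\<Prod>\<beta>\<in>#B. \<Prod>\<alpha>\<in>#add_mset a A. \<beta> - \<alpha>)
     = ((-1)^(size B) * (\<Prod>\<beta>\<in>#B. \<beta> - a)) * ((-1)^(size A * size B) * (\<Prod>\<beta>\<in>#B. \<Prod>\<alpha>\<in>#A. \<beta> - \<alpha>))"
    by (simp add: prod_mset.distrib power_add mult_ac)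
  also have "\<dots> = (\<Prod>\<beta>\<in>#B. a - \<beta>) * (\<Prod>\<alpha>\<in>#A. \<Prod>\<beta>\<in>#B. \<alpha> - \<beta>)"
    using add neg_prod_mset by metis
  finally show ?case by simp
qed

lemma poly_split0: "poly (\<Prod>\<alpha>\<in>#A. [:-\<alpha>,1:]) (x::'k::comm_ring_1) = (\<Prod>\<alpha>\<in>#A. x - \<alpha>)"
  by (induction A) (simp_all add: left_diff_distrib)

lemma poly_split: "poly (smult (c::'k::comm_ring_1) (\<Prod>\<alpha>\<in>#A. [:-\<alpha>,1:])) x = c * (\<Prod>\<alpha>\<in>#A. x - \<alpha>)"
  by (simp only: poly_smult poly_split0)

lemma prod_mset_const_mult: "(\<Prod>\<beta>\<in>#B. c * g \<beta>) = (c::'k::comm_ring_1)^(size B) * (\<Prod>\<beta>\<in>#B. g \<beta>)"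
  by (induction B) (auto simp: algebra_simps)

lemma split_swap:
  fixes c d :: "'k::comm_ring_1"
  assumes f: "f = smult c (\<Prod>\<alpha>\<in>#A. [:-\<alpha>,1:])" and q: "q = smult d (\<Prod>\<alpha>\<in>#B. [:-\<alpha>,1:])"
  shows "(-1)^(size A * size B) * d^(size A) * (\<Prod>\<beta>\<in>#B. poly f \<beta>) = c^(size B) * (\<Prod>\<alpha>\<in>#A. poly q \<alpha>)"
proof -
  have "(-1)^(size A * size B) * d^(size A) * (\<Prod>\<beta>\<in>#B. poly f \<beta>)
    = d^(size A) * c^(size B) * ((-1)^(size A * size B) * (\<Prod>\<beta>\<in>#B. \<Prod>\<alpha>\<in>#A. \<beta> - \<alpha>))"
    unfolding f poly_split prod_mset_const_mult by (simp add: algebra_simps)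
  also have "\<dots> = d^(size A) * c^(size B) * (\<Prod>\<alpha>\<in>#A. \<Prod>\<beta>\<in>#B. \<alpha> - \<beta>)"
    by (simp add: swap_double_prod)
  also have "\<dots> = c^(size B) * (\<Prod>\<alpha>\<in>#A. poly q \<alpha>)"
    unfolding q poly_split prod_mset_const_mult by (simp add: algebra_simps)
  finally show ?thesis .
qed

lemma prod_mset_constant': "(\<Prod>\<beta>\<in>#B. (c::'k::comm_ring_1)) = c^(size B)"
  by (induction B) auto

lemma res_split:
  fixes f q :: "'k::alg_closed_field poly"
  assumes "f \<noteq> 0" "q \<noteq> 0" "degree q \<le> degree f" "size A = degree f"
    "f = smult (lead_coeff f) (\<Prod>\<alpha>\<in>#A. [:-\<alpha>,1:])"
  shows "resultant f q = lead_coeff f ^ degree q * (\<Prod>\<alpha>\<in>#A. poly q \<alpha>)"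
  using assms
proof (induction "degree q" arbitrary: f q A rule: less_induct)
  case less
  note f0 = less.prems(1) and q0 = less.prems(2) and dfg = less.prems(3)
    and sA = less.prems(4) and fA = less.prems(5)
  show ?case
  proof (cases "degree q = 0")
    case True
    then obtain d where qd: "q = [:d:]" by (metis degree_eq_zeroE)
    have e: "image_mset (poly [:d:]) A = image_mset (\<lambda>_. d) A" by (rule image_mset_cong) simp
    show ?thesis unfolding qd by (simp add: e sA[symmetric] prod_mset_constant')
  next
    case False
    obtain B where sB: "size B = degree q" and qB: "q = smult (lead_coeff q) (\<Prod>\<alpha>\<in>#B. [:-\<alpha>,1:])"
      using alg_closed_imp_factorization[OF q0] by blast
    define H where "H = f mod q"
    have FGH: "f + (- (f div q)) * q = H" unfolding H_def
      by (metis add_diff_cancel_left' div_mult_mod_eq minus_mult_left add.commute diff_conv_add_uminus)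
    have dH: "degree H < degree q"
      using False degree_mod_less[OF q0] unfolding H_def by (cases "f mod q = 0") auto
    have choice: "degree q > degree H \<or> H = 0 \<and> f \<noteq> 0 \<and> q \<noteq> 0" using dH by auto
    have rootq: "poly q \<beta> = 0" if "\<beta> \<in># B" for \<beta>
    proof -
      have "poly q \<beta> = lead_coeff q * (\<Prod>\<alpha>\<in>#B. \<beta> - \<alpha>)"
        by (subst qB) (simp only: poly_split)
      moreover have "(\<Prod>\<alpha>\<in>#B. \<beta> - \<alpha>) = 0" using that
        by (metis (no_types, lifting) diff_self image_eqI prod_mset_zero_iff set_image_mset)
      ultimately show ?thesis by simp
    qed
    have polyH: "poly H \<beta> = poly f \<beta>" if "\<beta> \<in># B" for \<beta>
      using rootq[OF that] FGH[symmetric] by simp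
    have key: "resultant f q = (-1)^(degree f * degree q) * lead_coeff q ^ degree f * (\<Prod>\<beta>\<in>#B. poly H \<beta>)"
    proof (cases "degree H = 0")
      case True
      have "degree q > degree H \<or> H \<noteq> 0" using dH by auto
      from BT_lemma_1_13[OF FGH dfg choice this]
      have "subresultant 0 f q = smult ((-1)^((degree f) * (degree q)) * lead_coeff q ^ degree f * lead_coeff H ^ (degree q - 1)) H"
        using True by simp
      from arg_cong[OF this, of "\<lambda>p. coeff p 0"]
      have "resultant f q = (-1)^((degree f) * (degree q)) * lead_coeff q ^ degree f * lead_coeff H ^ (degree q - 1) * coeff H 0"
        by (simp add: subresultant_resultant)
      moreover have "poly H \<beta> = coeff H 0" for \<beta> using True by (metis degree_eq_zeroE poly_pCons poly_0 mult_zero_right add.right_neutral coeff_pCons_0)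
      moreover have "lead_coeff H ^ (degree q - 1) * coeff H 0 = coeff H 0 ^ degree q"
        using True False by (metis power_minus_mult not_gr_zero)
      ultimately show ?thesis by (simp add: prod_mset_constant' sB)
    next
      case dH0: False
      from BT_lemma_1_12[OF FGH dfg choice, of 0] dH0
      have "subresultant 0 f q = smult ((-1)^((degree f) * (degree q)) * lead_coeff q ^ (degree f - degree H)) (subresultant 0 q H)"
        by simp
      from arg_cong[OF this, of "\<lambda>p. coeff p 0"]
      have r1: "resultant f q = (-1)^((degree f) * (degree q)) * lead_coeff q ^ (degree f - degree H) * resultant q H"
        by (simp add: subresultant_resultant)
      have H0: "H \<noteq> 0" using dH0 by auto
      have r2: "resultant q H = lead_coeff q ^ degree H * (\<Prod>\<beta>\<in>#B. poly H \<beta>)"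
        using less.hyps[OF dH q0 H0 _ sB qB] dH by simp
      have "lead_coeff q ^ (degree f - degree H) * lead_coeff q ^ degree H = lead_coeff q ^ degree f"
        using dH dfg by (simp add: power_add[symmetric])
      then show ?thesis unfolding r1 r2 by (simp add: mult_ac)
    qed
    have "(\<Prod>\<beta>\<in>#B. poly H \<beta>) = (\<Prod>\<beta>\<in>#B. poly f \<beta>)"
      using polyH by (metis image_mset_cong)
    with key have key2: "resultant f q = (-1)^(degree f * degree q) * lead_coeff q ^ degree f * (\<Prod>\<beta>\<in>#B. poly f \<beta>)"
      by simp
    show ?thesis unfolding key2 using split_swap[OF fA qB] sA sB by simp
  qed
qed



lemma coeff_prod_lin:
  fixes u v :: "nat \<Rightarrow> 'k::comm_ring_1"
  shows "coeff (\<Prod>i<n. [:u i, v i:]) 0 = (\<Prod>i<n. u i) \<and>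
         coeff (\<Prod>i<n. [:u i, v i:]) 1 = (\<Sum>i<n. v i * (\<Prod>j\<in>{..<n}-{i}. u j))"
proof (induction n)
  case 0 then show ?case by simp
next
  case (Suc n)
  have c0: "coeff (p * [:a, b:]) 0 = coeff p 0 * a" for p :: "'k poly" and a b
    by (simp add: coeff_mult)
  have c1: "coeff (p * [:a, b:]) 1 = coeff p 1 * a + coeff p 0 * b" for p :: "'k poly" and a b
    by (simp add: coeff_mult numeral_2_eq_2 atMost_Suc)
  have split: "{..<Suc n} - {i} = insert n ({..<n} - {i})" if "i < n" for i using that by auto
  have "(\<Sum>i<Suc n. v i * (\<Prod>j\<in>{..<Suc n}-{i}. u j))
      = (\<Sum>i<n. v i * (\<Prod>j\<in>{..<n}-{i}. u j)) * u n + v n * (\<Prod>i<n. u i)"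
  proof -
    have "(\<Sum>i<n. v i * (\<Prod>j\<in>{..<Suc n}-{i}. u j)) = (\<Sum>i<n. v i * (\<Prod>j\<in>{..<n}-{i}. u j) * u n)"
      by (rule sum.cong) (auto simp: split mult_ac)
    moreover have "{..<Suc n} - {n} = {..<n}" by auto
    ultimately show ?thesis by (simp add: sum_distrib_right)
  qed
  then show ?case using Suc by (simp add: c0 c1)
qed

lemma pderiv_root:
  fixes \<alpha> :: "nat \<Rightarrow> 'k::field"
  assumes f: "f = smult c (\<Prod>j<n. [:-\<alpha> j,1:])" and i: "i < n"
  shows "poly (pderiv f) (\<alpha> i) = c * (\<Prod>j\<in>{..<n}-{i}. \<alpha> i - \<alpha> j)"
proof -
  define r where "r = smult c (\<Prod>j\<in>{..<n}-{i}. [:-\<alpha> j,1:])"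
  have fr: "f = [:-\<alpha> i,1:] * r" unfolding f r_def
    using prod.remove[of "{..<n}" i "\<lambda>j. [:-\<alpha> j,1:]"] i by simp
  have d1: "pderiv [:-\<alpha> i,1:] = 1" by (simp add: pderiv_pCons)
  have "pderiv f = [:-\<alpha> i,1:] * pderiv r + r * 1" unfolding fr pderiv_mult d1 ..
  then have "pderiv f = [:-\<alpha> i,1:] * pderiv r + r" by simp
  then have "poly (pderiv f) (\<alpha> i) = poly r (\<alpha> i)" by simp
  also have "\<dots> = c * (\<Prod>j\<in>{..<n}-{i}. \<alpha> i - \<alpha> j)" unfolding r_def by (simp add: poly_prod)
  finally show ?thesis .
qed

lemma lagrange_zero:
  fixes \<alpha> :: "nat \<Rightarrow> 'k::field"
  assumes inj: "inj_on \<alpha> {..<n}" and n: "n \<ge> 1" and g: "\<forall>k\<ge>n-1. coeff g k = 0"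
  shows "(\<Sum>i<n. poly g (\<alpha> i) / (\<Prod>j\<in>{..<n}-{i}. \<alpha> i - \<alpha> j)) = 0"
proof -
  define w where "w i = (\<Prod>j\<in>{..<n}-{i}. \<alpha> i - \<alpha> j)" for i
  define P where "P i = (\<Prod>j\<in>{..<n}-{i}. [:-\<alpha> j,1:])" for i
  have wnz: "w i \<noteq> 0" if "i < n" for i
    unfolding w_def using inj that by (auto simp: inj_on_def)
  have PdP: "degree (P i) = n - 1 \<and> coeff (P i) (n-1) = 1" if "i < n" for i
  proof -
    have "degree (P i) = sum (degree \<circ> (\<lambda>j. [:-\<alpha> j,1:])) ({..<n}-{i}) \<and>
      coeff (P i) (sum (degree \<circ> (\<lambda>j. [:-\<alpha> j,1:])) ({..<n}-{i})) = 1"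
      unfolding P_def by (rule degree_prod_sum_monic) auto
    moreover have "sum (degree \<circ> (\<lambda>j. [:-\<alpha> j,1:])) ({..<n}-{i}) = n - 1"
      using that by (simp add: card_Diff_singleton)
    ultimately show ?thesis by simp
  qed
  define L where "L = (\<Sum>i<n. smult (poly g (\<alpha> i) / w i) (P i))"
  have cL: "coeff L (n-1) = (\<Sum>i<n. poly g (\<alpha> i) / w i)"
    unfolding L_def coeff_sum coeff_smult using PdP by simp
  have dL: "degree L \<le> n - 1"
    unfolding L_def by (rule degree_sum_le) (auto intro: order.trans[OF degree_smult_le] simp: PdP)
  have dg: "degree g \<le> n - 1" by (rule degree_le) (use g in auto)
  have pL: "poly L (\<alpha> m) = poly g (\<alpha> m)" if m: "m < n" for m
  proof -
    have z: "poly (P i) (\<alpha> m) = 0" if "i < n" "i \<noteq> m" for i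
      unfolding P_def poly_prod using m that by (auto intro!: prod_zero)
    have "poly L (\<alpha> m) = (\<Sum>i<n. poly g (\<alpha> i) / w i * poly (P i) (\<alpha> m))"
      unfolding L_def poly_sum by simp
    also have "\<dots> = poly g (\<alpha> m) / w m * poly (P m) (\<alpha> m)
       + (\<Sum>i\<in>{..<n}-{m}. poly g (\<alpha> i) / w i * poly (P i) (\<alpha> m))"
      using sum.remove[of "{..<n}" m] m by simp
    also have "(\<Sum>i\<in>{..<n}-{m}. poly g (\<alpha> i) / w i * poly (P i) (\<alpha> m)) = 0"
      by (rule sum.neutral) (auto simp: z)
    also have "poly (P m) (\<alpha> m) = w m" unfolding P_def w_def poly_prod by simp
    finally show ?thesis using wnz[OF m] by simp
  qed
  have "L - g = 0"
  proof (rule ccontr)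
    assume D: "L - g \<noteq> 0"
    have "\<alpha> ` {..<n} \<subseteq> {x. poly (L - g) x = 0}" using pL by auto
    moreover have "finite {x. poly (L - g) x = 0}" using poly_roots_finite[OF D] .
    ultimately have "card (\<alpha> ` {..<n}) \<le> card {x. poly (L - g) x = 0}" by (rule card_mono[rotated])
    also have "\<dots> \<le> degree (L - g)" by (rule card_poly_roots_bound[OF D])
    also have "\<dots> \<le> n - 1" using degree_diff_le[OF dL dg] .
    finally show False using card_image[OF inj] n by simp
  qed
  then have "L = g" by simp
  then show ?thesis using cL g w_def by simp
qed

lemma dr_zero:
  fixes \<alpha> :: "nat \<Rightarrow> 'k::field"
  assumes f: "f = smult c (\<Prod>j<n. [:-\<alpha> j,1:])" and n: "n \<ge> 2" and g: "\<forall>k\<ge>n-1. coeff g k = 0"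
  shows "(\<Sum>i<n. (\<alpha> i * poly g (\<alpha> i)) * (\<Prod>j\<in>{..<n}-{i}. \<alpha> j * poly (pderiv f) (\<alpha> j))) = 0"
proof -
  define w where "w i = (\<Prod>j\<in>{..<n}-{i}. \<alpha> i - \<alpha> j)" for i
  have pd: "poly (pderiv f) (\<alpha> j) = c * w j" if "j < n" for j
    using pderiv_root[OF f that] unfolding w_def .
  have "(\<Sum>i<n. (\<alpha> i * poly g (\<alpha> i)) * (\<Prod>j\<in>{..<n}-{i}. \<alpha> j * poly (pderiv f) (\<alpha> j)))
     = (\<Sum>i<n. (\<alpha> i * poly g (\<alpha> i)) * (\<Prod>j\<in>{..<n}-{i}. \<alpha> j * (c * w j)))"
    by (intro sum.cong refl arg_cong2[where f="(*)"] prod.cong) (auto simp: pd)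
  also have "\<dots> = 0"
  proof (cases "inj_on \<alpha> {..<n}")
    case True
    have wnz: "w i \<noteq> 0" if "i < n" for i
      unfolding w_def using True that by (auto simp: inj_on_def)
    define C where "C = (\<Prod>j<n. \<alpha> j) * c^(n-1) * (\<Prod>j<n. w j)"
    have trm: "(\<alpha> i * poly g (\<alpha> i)) * (\<Prod>j\<in>{..<n}-{i}. \<alpha> j * (c * w j))
       = C * (poly g (\<alpha> i) / w i)" if i: "i < n" for i
    proof -
      have A1: "(\<Prod>j\<in>{..<n}-{i}. \<alpha> j * (c * w j)) = (\<Prod>j\<in>{..<n}-{i}. \<alpha> j) * c^(n-1) * (\<Prod>j\<in>{..<n}-{i}. w j)"
        using i by (simp add: prod.distrib card_Diff_singleton)
      have A2: "(\<Prod>j<n. \<alpha> j) = \<alpha> i * (\<Prod>j\<in>{..<n}-{i}. \<alpha> j)" using prod.remove[of "{..<n}" i \<alpha>] i by simp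
      have A3: "(\<Prod>j<n. w j) = w i * (\<Prod>j\<in>{..<n}-{i}. w j)" using prod.remove[of "{..<n}" i w] i by simp
      show ?thesis unfolding C_def A1 A2 A3 using wnz[OF i] by (simp add: field_simps)
    qed
    have "(\<Sum>i<n. (\<alpha> i * poly g (\<alpha> i)) * (\<Prod>j\<in>{..<n}-{i}. \<alpha> j * (c * w j)))
       = C * (\<Sum>i<n. poly g (\<alpha> i) / w i)"
      by (simp add: trm sum_distrib_left)
    also have "(\<Sum>i<n. poly g (\<alpha> i) / w i) = 0"
      using lagrange_zero[OF True _ g] n unfolding w_def by simp
    finally show ?thesis by simp
  next
    case False
    then obtain p q where pq: "p < n" "q < n" "p \<noteq> q" "\<alpha> p = \<alpha> q"
      unfolding inj_on_def by auto
    have "(\<Prod>j\<in>{..<n}-{i}. \<alpha> j * (c * w j)) = 0" if i: "i < n" for i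
    proof (rule prod_zero)
      define j0 where "j0 = (if p \<noteq> i then p else q)"
      define k0 where "k0 = (if p \<noteq> i then q else p)"
      have j0: "j0 \<in> {..<n}-{i}" using pq unfolding j0_def by auto
      have k0: "k0 \<in> {..<n}-{j0}" "\<alpha> j0 - \<alpha> k0 = 0" using pq unfolding j0_def k0_def by auto
      have "w j0 = 0" unfolding w_def by (rule prod_zero) (use k0 in auto)
      then show "\<exists>a\<in>{..<n}-{i}. \<alpha> a * (c * w a) = 0" using j0 by auto
    qed simp
    then show ?thesis by (intro sum.neutral) auto
  qed
  finally show ?thesis .
qed



lemma coeff_form_dehom: "coeff (form_dehom d c) i = (if i \<le> d then c i else 0)"
  unfolding form_dehom_def coeff_sum coeff_monom by (auto simp: sum.delta)

lemma poly_form_dehom: "poly (form_dehom d c) x = (\<Sum>i\<le>d. c i * x ^ i)"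
  unfolding form_dehom_def poly_sum poly_monom by simp

lemma psi_hom: "comm_ring_hom (\<lambda>p. poly (map_poly (to_ac::'a::field \<Rightarrow> 'a alg_closure) p) t)"
proof -
  interpret a: comm_ring_hom "to_ac :: 'a \<Rightarrow> 'a alg_closure" by unfold_locales simp_all
  interpret m: map_poly_comm_ring_hom "to_ac :: 'a \<Rightarrow> 'a alg_closure" ..
  show ?thesis by unfold_locales (simp_all add: m.hom_add m.hom_mult)
qed

lemma mset_prod_nth: "(\<Prod>x\<in>#mset xs. h x) = (\<Prod>i<length xs. h (xs!i))"
proof (induction xs)
  case Nil then show ?case by simp
next
  case (Cons y ys)
  then show ?case unfolding length_Cons prod.lessThan_Suc_shift by simp
qed

lemma poly_qq:
  fixes A B :: "nat \<Rightarrow> 'k::field"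
  assumes n: "n \<ge> 2"
  shows "poly (form_dehom n (\<lambda>i. of_nat i * A i + t * (if 1 \<le> i \<and> i - 1 \<le> n - 2 then B (i-1) else 0))) x
   = x * poly (pderiv (form_dehom n A)) x + t * (x * poly (form_dehom (n-2) B) x)"
proof -
  obtain m where m: "n = Suc (Suc m)" using n by (metis add_2_eq_Suc le_Suc_ex)
  have p1: "x * poly (pderiv (form_dehom n A)) x = (\<Sum>i\<le>n. of_nat i * A i * x ^ i)"
  proof -
    have "x * poly (pderiv (form_dehom n A)) x = (\<Sum>i\<le>n. x * (of_nat i * A i * x ^ (i - 1)))"
      unfolding form_dehom_def pderiv_sum pderiv_monom poly_sum poly_monom sum_distrib_left by simp
    also have "\<dots> = (\<Sum>i\<le>n. of_nat i * A i * x ^ i)"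
      by (rule sum.cong) (auto simp: power_eq_if)
    finally show ?thesis .
  qed
  have p2: "(\<Sum>i\<le>n. (if 1 \<le> i \<and> i - 1 \<le> n - 2 then B (i-1) else 0) * x ^ i) = x * poly (form_dehom (n-2) B) x"
  proof -
    define c where "c i = (if 1 \<le> i \<and> i - 1 \<le> n - 2 then B (i-1) else 0)" for i
    have "(\<Sum>i\<le>n. c i * x ^ i) = (\<Sum>i\<le>Suc m. c (Suc i) * x ^ (Suc i))"
      unfolding m by (subst sum.atMost_Suc_shift) (simp add: c_def)
    also have "\<dots> = (\<Sum>i\<le>m. c (Suc i) * x ^ (Suc i))" by (simp add: c_def m)
    also have "\<dots> = (\<Sum>i\<le>m. B i * x ^ (Suc i))" by (rule sum.cong) (auto simp: m c_def)
    also have "\<dots> = x * poly (form_dehom (n-2) B) x"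
      unfolding poly_form_dehom m by (simp add: sum_distrib_left mult_ac)
    finally show ?thesis unfolding c_def .
  qed
  have "poly (form_dehom n (\<lambda>i. of_nat i * A i + t * (if 1 \<le> i \<and> i - 1 \<le> n - 2 then B (i-1) else 0))) x
     = (\<Sum>i\<le>n. of_nat i * A i * x ^ i) + t * (\<Sum>i\<le>n. (if 1 \<le> i \<and> i - 1 \<le> n - 2 then B (i-1) else 0) * x ^ i)"
    unfolding poly_form_dehom sum_distrib_left sum.distrib[symmetric] by (rule sum.cong) (auto simp: algebra_simps)
  then show ?thesis unfolding p1 p2 .
qed

lemma coeff_DR_numer_1:
  fixes a b :: "nat \<Rightarrow> 'a::field_char_0"
  assumes n: "n \<ge> 2" and an: "a n \<noteq> 0"
  shows "coeff (DR_numer n a b) 1 = 0"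
proof -
  define F :: "'a poly poly" where "F = form_dehom n (\<lambda>i. [:a i:])"
  define Q where "Q = form_dehom n (DR_aux_coeff n a b)"
  have P: "DR_numer n a b = (-1)^(n*n) * det (sylvester_mat_sub n n F Q)"
    unfolding DR_numer_def res_form_def F_def Q_def ..
  define A' :: "nat \<Rightarrow> 'a alg_closure" where "A' i = to_ac (a i)" for i
  define B' :: "nat \<Rightarrow> 'a alg_closure" where "B' j = to_ac (b j)" for j
  define ff where "ff = form_dehom n A'"
  define gg where "gg = form_dehom (n-2) B'"
  define qq where "qq t = form_dehom n (\<lambda>i. of_nat i * A' i + t * (if 1 \<le> i \<and> i - 1 \<le> n - 2 then B' (i-1) else 0))" for t
  have dff: "degree ff = n"
  proof (rule antisym)
    show "degree ff \<le> n" by (rule degree_le) (auto simp: ff_def coeff_form_dehom)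
    show "n \<le> degree ff" by (rule le_degree) (simp add: ff_def coeff_form_dehom A'_def an)
  qed
  have lff: "lead_coeff ff = A' n" using dff by (simp add: ff_def coeff_form_dehom)
  have An0: "A' n \<noteq> 0" using an by (simp add: A'_def)
  have ff0: "ff \<noteq> 0" using lff An0 by auto
  have cqn: "coeff (qq t) n = of_nat n * A' n" for t using n by (simp add: qq_def coeff_form_dehom)
  have cqn0: "coeff (qq t) n \<noteq> 0" for t using n An0 unfolding cqn by simp
  have dqq: "degree (qq t) = n" for t
  proof (rule antisym)
    show "degree (qq t) \<le> n" by (rule degree_le) (auto simp: qq_def coeff_form_dehom)
    show "n \<le> degree (qq t)" by (rule le_degree) (use cqn0 in auto)
  qed
  have qq0: "qq t \<noteq> 0" for t using cqn0[of t] by auto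
  obtain M where M: "size M = degree ff" "ff = smult (lead_coeff ff) (\<Prod>x\<in>#M. [:-x,1:])"
    using alg_closed_imp_factorization[OF ff0] by blast
  obtain xs where xs: "mset xs = M" using ex_mset by blast
  define \<alpha> where "\<alpha> i = xs ! i" for i
  have lxs: "length xs = n" using M(1) xs dff by (metis size_mset)
  have ffa: "ff = smult (A' n) (\<Prod>i<n. [:-\<alpha> i,1:])"
    using M(2) unfolding lff xs[symmetric] mset_prod_nth lxs \<alpha>_def .
  define u where "u i = \<alpha> i * poly (pderiv ff) (\<alpha> i)" for i
  define v where "v i = \<alpha> i * poly gg (\<alpha> i)" for i
  define C where "C = (-1)^(n*n) * A' n ^ n"
  have psiDR: "poly (map_poly to_ac (DR_numer n a b)) t = (-1)^(n*n) * det (sylvester_mat_sub n n ff (qq t))" for t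
  proof -
    define \<psi> where "\<psi> p = poly (map_poly to_ac p) t" for p :: "'a poly"
    interpret psi: comm_ring_hom \<psi> unfolding \<psi>_def by (rule psi_hom)
    have \<psi>c: "\<psi> [:x:] = to_ac x" for x unfolding \<psi>_def Polynomial.map_poly_pCons[where f=to_ac, OF to_ac_0] map_poly_0 by simp
    have \<psi>l: "\<psi> [:x, y:] = to_ac x + t * to_ac y" for x y unfolding \<psi>_def Polynomial.map_poly_pCons[where f=to_ac, OF to_ac_0] map_poly_0 by simp
    have mF: "map_poly \<psi> F = ff"
    proof (rule poly_eqI)
      fix i show "coeff (map_poly \<psi> F) i = coeff ff i"
        unfolding coeff_map_poly[of \<psi>, OF psi.hom_zero] F_def ff_def coeff_form_dehom
        by (cases "i \<le> n") (simp_all only: \<psi>c A'_def if_True if_False psi.hom_zero)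
    qed
    have mQ: "map_poly \<psi> Q = qq t"
    proof (rule poly_eqI)
      fix i show "coeff (map_poly \<psi> Q) i = coeff (qq t) i"
        unfolding coeff_map_poly[of \<psi>, OF psi.hom_zero] Q_def qq_def coeff_form_dehom DR_aux_coeff_def
        by (cases "i \<le> n"; cases "1 \<le> i \<and> i - 1 \<le> n - 2") (simp_all only: \<psi>l A'_def B'_def if_True if_False psi.hom_zero to_ac_0 to_ac_mult to_ac_of_nat, simp_all)
    qed
    have "\<psi> (det (sylvester_mat_sub n n F Q)) = det (map_mat \<psi> (sylvester_mat_sub n n F Q))"
      by (rule psi.hom_det[symmetric])
    also have "map_mat \<psi> (sylvester_mat_sub n n F Q) = sylvester_mat_sub n n ff (qq t)"
      unfolding sylvester_mat_sub_map[of \<psi>, OF psi.hom_zero] mF mQ ..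
    finally have d: "\<psi> (det (sylvester_mat_sub n n F Q)) = det (sylvester_mat_sub n n ff (qq t))" .
    have m: "\<psi> ((-1)^(n*n)) = (-1)^(n*n)" unfolding psi.hom_power psi.hom_uminus psi.hom_one ..
    have "\<psi> (DR_numer n a b) = (-1)^(n*n) * det (sylvester_mat_sub n n ff (qq t))"
      unfolding P psi.hom_mult d m ..
    then show ?thesis unfolding \<psi>_def .
  qed
  have eval: "poly (map_poly to_ac (DR_numer n a b)) t = poly (smult C (\<Prod>i<n. [:u i, v i:])) t" for t
  proof -
    have "poly (map_poly to_ac (DR_numer n a b)) t = (-1)^(n*n) * det (sylvester_mat_sub n n ff (qq t))"
      by (rule psiDR)
    also have "det (sylvester_mat_sub n n ff (qq t)) = resultant ff (qq t)"
      by (simp add: resultant_def sylvester_mat_def dff dqq)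
    also have "resultant ff (qq t) = A' n ^ n * (\<Prod>x\<in>#M. poly (qq t) x)"
      using res_split[OF ff0 qq0 _ M(1) M(2)] dff dqq lff by simp
    also have "(\<Prod>x\<in>#M. poly (qq t) x) = (\<Prod>i<n. u i + t * v i)"
    proof -
      have "(\<Prod>x\<in>#M. poly (qq t) x) = (\<Prod>i<n. poly (qq t) (\<alpha> i))"
        unfolding xs[symmetric] mset_prod_nth lxs \<alpha>_def ..
      also have "\<dots> = (\<Prod>i<n. u i + t * v i)"
        unfolding qq_def u_def v_def ff_def gg_def poly_qq[OF n] ..
      finally show ?thesis .
    qed
    finally show ?thesis by (simp add: C_def poly_prod mult.assoc)
  qed
  have "map_poly to_ac (DR_numer n a b) = smult C (\<Prod>i<n. [:u i, v i:])"
    by (rule iffD1[OF poly_eq_poly_eq_iff], rule ext, rule eval)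
  then have "to_ac (coeff (DR_numer n a b) 1) = C * (\<Sum>i<n. v i * (\<Prod>j\<in>{..<n}-{i}. u j))"
  proof -
    have "to_ac (coeff (DR_numer n a b) 1) = coeff (map_poly to_ac (DR_numer n a b)) 1"
      by (rule coeff_map_poly[symmetric]) simp
    also note \<open>map_poly to_ac (DR_numer n a b) = smult C (\<Prod>i<n. [:u i, v i:])\<close>
    finally show ?thesis unfolding coeff_smult using coeff_prod_lin[of u v n] by simp
  qed
  also have "(\<Sum>i<n. v i * (\<Prod>j\<in>{..<n}-{i}. u j)) = 0"
    unfolding u_def v_def by (rule dr_zero[OF ffa n]) (use n in \<open>auto simp: gg_def coeff_form_dehom\<close>)
  finally show ?thesis by simp
qed


theorem corollary4p1:
  fixes n :: nat and a b :: "nat \<Rightarrow> 'a::field_char_0"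
  assumes "n \<ge> 2" and "a 0 \<noteq> 0" and "a n \<noteq> 0"
  shows "DR n 1 a b = 0"
  unfolding DR_def using coeff_DR_numer_1[of n a b, OF assms(1) assms(3)] by simp

end
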